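(* No finite Blaschke product of degree $\ge2$ is outer regular; that is, if $\phi(z)=\omega\prod_{j=1}^d\frac{a_j-z}{1-\overline{a_j}z}$ with $|\omega|=1$, $a_j\in\mathbb{U}$ and $d\ge2$, then $\phi$ has a critical value in $\{z\in\hat{\mathbb{C}}:|z|\ge1\}\cup\{\infty\}$.
   Context: $\mathbb{U}$ is the open unit disc, $\hat{\mathbb{C}}$ the Riemann sphere. Rational functions are regarded as maps $\hat{\mathbb{C}}\to\hat{\mathbb{C}}$; the degree of $p/q$ (relatively prime polynomials) is $\max(\deg p,\deg q)$. A point $w$ is a regular value of a rational function $R$ of degree $d$ if $R^{-1}(\{w\})$ consists of $d$ distinct points, and a critical value otherwise. A rational self-map $\phi$ of $\mathbb{U}$ is outer regular if all its critical values lie in $\mathbb{U}$, i.e. every point of $\{|z|\ge1\}\cup\{\infty\}$ is a regular value of $\phi$. *)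

theory Defs
  imports "HOL-Computational_Algebra.Computational_Algebra" "HOL-Computational_Algebra.Field_as_Ring"
begin

text \<open>The Riemann sphere is modelled as complex option: None is the point at infinity.\<close>

definition red_num :: "complex poly \<Rightarrow> complex poly \<Rightarrow> complex poly" where
  "red_num p q = p div gcd p q"

definition red_den :: "complex poly \<Rightarrow> complex poly \<Rightarrow> complex poly" where
  "red_den p q = q div gcd p q"

definition rat_degree :: "complex poly \<Rightarrow> complex poly \<Rightarrow> nat" where
  "rat_degree p q = max (degree (red_num p q)) (degree (red_den p q))"

definition rat_map :: "complex poly \<Rightarrow> complex poly \<Rightarrow> complex option \<Rightarrow> complex option" where
  "rat_map p q z =
     (let P = red_num p q; Q = red_den p q in
      case z of
        Some c \<Rightarrow> (if poly Q c = 0 then None else Some (poly P c / poly Q c))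
      | None \<Rightarrow> (if degree P > degree Q then None
                else if degree P < degree Q then Some 0
                else Some (lead_coeff P / lead_coeff Q)))"

definition regular_value :: "complex poly \<Rightarrow> complex poly \<Rightarrow> complex option \<Rightarrow> bool" where
  "regular_value p q w \<longleftrightarrow>
     finite (rat_map p q -` {w}) \<and> card (rat_map p q -` {w}) = rat_degree p q"

definition critical_value :: "complex poly \<Rightarrow> complex poly \<Rightarrow> complex option \<Rightarrow> bool" where
  "critical_value p q w \<longleftrightarrow> \<not> regular_value p q w"

definition blaschke_num :: "complex \<Rightarrow> (nat \<Rightarrow> complex) \<Rightarrow> nat \<Rightarrow> complex poly" where
  "blaschke_num \<omega> a d = smult \<omega> (\<Prod>j\<in>{1..d}. [:a j, -1:])"

definition blaschke_den :: "(nat \<Rightarrow> complex) \<Rightarrow> nat \<Rightarrow> complex poly" where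
  "blaschke_den a d = (\<Prod>j\<in>{1..d}. [:1, - cnj (a j):])"

end

theory Submission imports Defs begin


lemma fta_deg: fixes p :: "complex poly" assumes "degree p > 0" shows "\<exists>z. poly p z = 0"
  using fundamental_theorem_of_algebra constant_degree assms by (metis neq0_conv)

definition rm :: "complex poly \<Rightarrow> complex poly \<Rightarrow> complex option \<Rightarrow> complex option" where
"rm P Q z = (case z of Some c \<Rightarrow> (if poly Q c = 0 then None else Some (poly P c / poly Q c))
   | None \<Rightarrow> (if degree P > degree Q then None else if degree P < degree Q then Some 0
              else Some (lead_coeff P / lead_coeff Q)))"

definition lev :: "complex poly \<Rightarrow> complex poly \<Rightarrow> complex option \<Rightarrow> complex poly" where
"lev P Q w = (case w of None \<Rightarrow> Q | Some c \<Rightarrow> P - smult c Q)"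

lemma double_root:
  fixes F :: "complex poly"
  assumes "poly F z = 0" "poly (pderiv F) z = 0"
  shows "[:-z,1:]^2 dvd F"
proof -
  obtain S where S: "F = [:-z,1:] * S" using assms(1) poly_eq_0_iff_dvd by (metis dvdE)
  have "pderiv F = [:-z,1:] * pderiv S + S * pderiv [:-z,1:]" unfolding S by (rule pderiv_mult)
  moreover have "pderiv [:-z,1:] = 1" by (simp add: pderiv_pCons)
  ultimately have "poly (pderiv F) z = poly S z" by simp
  then have "poly S z = 0" using assms(2) by simp
  then obtain T where "S = [:-z,1:] * T" using poly_eq_0_iff_dvd by (metis dvdE)
  then have "F = [:-z,1:]^2 * T" using S by (metis power2_eq_square mult.assoc)
  then show ?thesis by simp
qed

locale ratf =
  fixes P Q :: "complex poly" and d :: nat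
  assumes degP: "degree P = d" and degQ: "degree Q \<le> d" and d1: "d \<ge> 1"
    and nocom: "\<And>z. poly P z = 0 \<Longrightarrow> poly Q z \<noteq> 0"
begin

lemma P_ne: "P \<noteq> 0" using degP d1 by auto

lemma Q_ne: "Q \<noteq> 0"
proof
  assume "Q = 0"
  have "\<exists>z. poly P z = 0" using fta_deg[of P] degP d1 by simp
  then obtain z where "poly P z = 0" by blast
  then show False using nocom \<open>Q = 0\<close> by auto
qed

lemma lev_ne: "lev P Q w \<noteq> 0"
proof (cases w)
  case None then show ?thesis using Q_ne by (simp add: lev_def)
next
  case (Some c)
  show ?thesis
  proof
    assume h: "lev P Q w = 0"
    then have PQ: "P = smult c Q" using Some by (simp add: lev_def)
    have "\<exists>z. poly P z = 0" using fta_deg[of P] degP d1 by simp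
    then obtain z where z: "poly P z = 0" by blast
    then have "poly Q z \<noteq> 0" using nocom by auto
    then have "c = 0" using z PQ by simp
    then show False using PQ P_ne by simp
  qed
qed

lemma lev_deg: "degree (lev P Q w) \<le> d"
proof (cases w)
  case None then show ?thesis using degQ by (simp add: lev_def)
next
  case (Some c)
  have "degree (P - smult c Q) \<le> max (degree P) (degree (smult c Q))" by (rule degree_diff_le_max)
  also have "\<dots> \<le> d" using degP degQ degree_smult_le[of c Q] by simp
  finally show ?thesis using Some by (simp add: lev_def)
qed

lemma rm_Some: "rm P Q (Some z) = w \<longleftrightarrow> poly (lev P Q w) z = 0"
proof (cases w)
  case None then show ?thesis by (simp add: lev_def rm_def)
next
  case (Some c)
  show ?thesis
  proof
    assume "rm P Q (Some z) = w"
    then show "poly (lev P Q w) z = 0" using Some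
      by (auto simp: lev_def rm_def split: if_splits)
  next
    assume h: "poly (lev P Q w) z = 0"
    then have e: "poly P z = c * poly Q z" using Some by (simp add: lev_def)
    have "poly Q z \<noteq> 0"
    proof
      assume "poly Q z = 0" then have "poly P z = 0" using e by simp
      then show False using nocom \<open>poly Q z = 0\<close> by auto
    qed
    then show "rm P Q (Some z) = w" using Some e by (simp add: rm_def)
  qed
qed

lemma rm_None: "rm P Q None = w \<longleftrightarrow> degree (lev P Q w) < d"
proof (cases w)
  case None then show ?thesis using degP degQ by (auto simp: lev_def rm_def)
next
  case (Some c)
  have lP: "lead_coeff P \<noteq> 0" using P_ne by simp
  show ?thesis
  proof
    assume "rm P Q None = w"
    then have dq: "degree Q = d" and c: "c = lead_coeff P / lead_coeff Q" using Some degP degQ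
      by (auto simp: rm_def split: if_splits)
    have lQ: "lead_coeff Q \<noteq> 0" using Q_ne by simp
    have co: "coeff (P - smult c Q) d = 0" using dq degP c lQ by simp
    have "degree (P - smult c Q) \<le> d" using lev_deg[of w] Some by (simp add: lev_def)
    moreover have "degree (P - smult c Q) \<noteq> d"
    proof
      assume "degree (P - smult c Q) = d"
      then have "P - smult c Q = 0" using co by (metis leading_coeff_0_iff)
      then show False using co d1 \<open>degree (P - smult c Q) = d\<close> by simp
    qed
    ultimately show "degree (lev P Q w) < d" using Some by (simp add: lev_def)
  next
    assume "degree (lev P Q w) < d"
    then have "degree (P - smult c Q) < d" using Some by (simp add: lev_def)
    then have "coeff (P - smult c Q) d = 0" by (rule coeff_eq_0)
    then have e: "lead_coeff P = c * coeff Q d" using degP by simp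
    then have "coeff Q d \<noteq> 0" using lP by auto
    then have dq: "degree Q = d" using degQ le_degree by (metis antisym)
    then show "rm P Q None = w" using Some e degP lP by (auto simp: rm_def)
  qed
qed

lemma preimage_eq: "rm P Q -` {w} = Some ` {z. poly (lev P Q w) z = 0} \<union> (if degree (lev P Q w) < d then {None} else {})"
proof (rule set_eqI)
  fix x show "x \<in> rm P Q -` {w} \<longleftrightarrow> x \<in> Some ` {z. poly (lev P Q w) z = 0} \<union> (if degree (lev P Q w) < d then {None} else {})"
    using rm_Some rm_None by (cases x) auto
qed

lemma count: "finite (rm P Q -` {w}) \<and> card (rm P Q -` {w}) \<le> card {z. poly (lev P Q w) z = 0} + (if degree (lev P Q w) < d then 1 else 0)"
proof -
  have f: "finite {z. poly (lev P Q w) z = 0}" using lev_ne poly_roots_finite by blast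
  define A where "A = Some ` {z. poly (lev P Q w) z = 0}"
  define B :: "complex option set" where "B = (if degree (lev P Q w) < d then {None} else {})"
  have "card (rm P Q -` {w}) = card (A \<union> B)" unfolding preimage_eq A_def B_def ..
  also have "\<dots> \<le> card A + card B" by (rule card_Un_le)
  finally have "card (rm P Q -` {w}) \<le> card (Some ` {z. poly (lev P Q w) z = 0}) + card (if degree (lev P Q w) < d then {None::complex option} else {})"
    unfolding A_def B_def .
  also have "\<dots> = card {z. poly (lev P Q w) z = 0} + (if degree (lev P Q w) < d then 1 else 0)"
    by (simp add: card_image)
  finally show ?thesis using f by (simp add: preimage_eq)
qed

lemma crit1: assumes "[:-z0,1:]^2 dvd lev P Q w" shows "card (rm P Q -` {w}) < d"
proof -
  obtain T where T: "lev P Q w = [:-z0,1:]^2 * T" using assms by (metis dvdE)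
  have T0: "T \<noteq> 0" using T lev_ne by auto
  have dl: "degree (lev P Q w) = 2 + degree T" using T T0 by (simp add: degree_mult_eq degree_power_eq)
  have sub: "{z. poly (lev P Q w) z = 0} \<subseteq> insert z0 {z. poly T z = 0}" using T by auto
  have fT: "finite {z. poly T z = 0}" using T0 poly_roots_finite by blast
  have "card {z. poly (lev P Q w) z = 0} \<le> card (insert z0 {z. poly T z = 0})"
    using sub fT by (intro card_mono) auto
  also have "\<dots> \<le> Suc (card {z. poly T z = 0})" by (rule card_insert_le_m1) (auto)
  also have "\<dots> \<le> Suc (degree T)" using card_poly_roots_bound[OF T0] by simp
  finally have "card {z. poly (lev P Q w) z = 0} \<le> Suc (degree T)" .
  then show ?thesis using count[of w] dl lev_deg[of w] by (auto split: if_splits)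
qed

lemma crit2: assumes "degree (lev P Q w) + 2 \<le> d" shows "card (rm P Q -` {w}) < d"
  using count[of w] card_poly_roots_bound[OF lev_ne[of w]] assms by (auto split: if_splits)

end


lemma coeff_pderiv_mult_top:
  fixes F G :: "complex poly"
  assumes "degree F + degree G \<ge> 1"
  shows "coeff (pderiv F * G) (degree F + degree G - 1) = of_nat (degree F) * lead_coeff F * lead_coeff G"
proof (cases "degree F = 0")
  case True
  then obtain c where "F = [:c:]" by (metis degree_eq_zeroE)
  then show ?thesis using True by (simp add: pderiv_pCons)
next
  case False
  have dF: "degree (pderiv F) = degree F - 1" by (rule degree_pderiv)
  have lF: "lead_coeff (pderiv F) = of_nat (degree F) * lead_coeff F"
    using False dF by (simp add: coeff_pderiv)
  have "coeff (pderiv F * G) (degree (pderiv F) + degree G) = lead_coeff (pderiv F) * lead_coeff G"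
    by (rule coeff_mult_degree_sum)
  moreover have "degree (pderiv F) + degree G = degree F + degree G - 1" using dF False by simp
  ultimately show ?thesis using lF by simp
qed

lemma wr_coeff:
  fixes F G :: "complex poly"
  assumes "degree F + degree G \<ge> 1"
  shows "coeff (pderiv F * G - F * pderiv G) (degree F + degree G - 1)
     = (of_nat (degree F) - of_nat (degree G)) * lead_coeff F * lead_coeff G"
proof -
  have a: "coeff (pderiv F * G) (degree F + degree G - 1) = of_nat (degree F) * lead_coeff F * lead_coeff G"
    using assms by (rule coeff_pderiv_mult_top)
  have "coeff (pderiv G * F) (degree G + degree F - 1) = of_nat (degree G) * lead_coeff G * lead_coeff F"
    using assms by (intro coeff_pderiv_mult_top) simp
  then have b: "coeff (F * pderiv G) (degree F + degree G - 1) = of_nat (degree G) * lead_coeff F * lead_coeff G"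
    by (simp add: mult.commute add.commute mult.left_commute)
  show ?thesis using a b by (simp add: algebra_simps)
qed

lemma wr_deg:
  fixes F G :: "complex poly"
  assumes "degree F \<noteq> degree G" "F \<noteq> 0" "G \<noteq> 0"
  shows "degree F + degree G - 1 \<le> degree (pderiv F * G - F * pderiv G)"
proof (rule le_degree)
  have ne: "degree F + degree G \<ge> 1" using assms(1) by linarith
  have "(of_nat (degree F) - of_nat (degree G) :: complex) \<noteq> 0" using assms(1) by simp
  then show "coeff (pderiv F * G - F * pderiv G) (degree F + degree G - 1) \<noteq> 0"
    using wr_coeff[OF ne] assms by simp
qed

context ratf begin

definition W where "W = pderiv P * Q - P * pderiv Q"

lemma W_root: assumes "poly W z0 = 0" shows "[:-z0,1:]^2 dvd lev P Q (rm P Q (Some z0))"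
proof (cases "poly Q z0 = 0")
  case True
  then have "poly P z0 \<noteq> 0" using nocom by auto
  then have "poly (pderiv Q) z0 = 0" using assms True by (simp add: W_def)
  then show ?thesis using True double_root by (simp add: rm_def lev_def)
next
  case False
  define c where "c = poly P z0 / poly Q z0"
  have r: "rm P Q (Some z0) = Some c" using False by (simp add: rm_def c_def)
  have e: "poly (pderiv P) z0 * poly Q z0 = poly P z0 * poly (pderiv Q) z0" using assms by (simp add: W_def)
  have "poly (P - smult c Q) z0 = 0" using False by (simp add: c_def)
  moreover have "poly (pderiv (P - smult c Q)) z0 = 0"
    using False e by (simp add: c_def pderiv_diff pderiv_smult field_simps)
  ultimately show ?thesis using r double_root by (simp add: lev_def)
qed

lemma W_deg: assumes "d \<ge> 2" shows "degree W > 0"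
proof (cases "rm P Q None")
  case None
  then have dq: "degree Q < d" using rm_None[of None] by (simp add: lev_def)
  have "degree P + degree Q - 1 \<le> degree W" unfolding W_def
    using dq degP P_ne Q_ne by (intro wr_deg) auto
  then show ?thesis using degP assms by linarith
next
  case (Some c)
  define R where "R = P - smult c Q"
  have dR: "degree R < d" using rm_None[of "Some c"] Some by (simp add: lev_def R_def)
  have dq: "degree Q = d"
  proof (rule ccontr)
    assume "degree Q \<noteq> d"
    then have "degree Q < d" using degQ by simp
    then have "rm P Q None = None" using rm_None[of None] by (simp add: lev_def)
    then show False using Some by simp
  qed
  have R0: "R \<noteq> 0" using lev_ne[of "Some c"] by (simp add: lev_def R_def)
  have "W = pderiv R * Q - R * pderiv Q" unfolding W_def R_def
    by (simp add: pderiv_diff pderiv_smult algebra_simps)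
  moreover have "degree R + degree Q - 1 \<le> degree (pderiv R * Q - R * pderiv Q)"
    using dq dR R0 Q_ne by (intro wr_deg) auto
  ultimately have "degree R + degree Q - 1 \<le> degree W" by simp
  then show ?thesis using dq assms by linarith
qed

end


definition refl :: "nat \<Rightarrow> complex poly \<Rightarrow> complex poly" where
  "refl n T = (\<Sum>k\<le>n. monom (cnj (coeff T k)) (n - k))"

lemma poly_upto: fixes T :: "complex poly" assumes "degree T \<le> n"
  shows "poly T x = (\<Sum>k\<le>n. coeff T k * x ^ k)"
proof -
  have "poly T x = (\<Sum>k\<le>degree T. coeff T k * x ^ k)" by (rule poly_altdef)
  also have "\<dots> = (\<Sum>k\<le>n. coeff T k * x ^ k)"
    using assms by (intro sum.mono_neutral_left) (auto simp: coeff_eq_0)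
  finally show ?thesis .
qed

lemma poly_refl: assumes "degree T \<le> n" "z \<noteq> 0"
  shows "poly (refl n T) z = z ^ n * cnj (poly T (1 / cnj z))"
proof -
  have "poly (refl n T) z = (\<Sum>k\<le>n. cnj (coeff T k) * z ^ (n - k))"
    by (simp add: refl_def poly_sum poly_monom)
  also have "\<dots> = (\<Sum>k\<le>n. z ^ n * (cnj (coeff T k) * (1 / z) ^ k))"
  proof (intro sum.cong refl)
    fix k assume "k \<in> {..n}"
    then have "z ^ n = z ^ (n - k) * z ^ k" by (simp add: power_add[symmetric])
    then show "cnj (coeff T k) * z ^ (n - k) = z ^ n * (cnj (coeff T k) * (1 / z) ^ k)"
      using assms(2) by (simp add: field_simps)
  qed
  also have "\<dots> = z ^ n * cnj (poly T (1 / cnj z))"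
    using assms(1) by (simp add: poly_upto sum_distrib_left)
  finally show ?thesis .
qed

lemma degree_refl: "degree (refl n T) \<le> n"
  unfolding refl_def by (intro degree_sum_le) (auto simp: degree_monom_le intro: order.trans[OF degree_monom_le])

lemma poly_eq_nz: fixes p q :: "complex poly"
  assumes "\<And>z. z \<noteq> 0 \<Longrightarrow> poly p z = poly q z" shows "p = q"
proof (rule ccontr)
  assume "p \<noteq> q"
  then have "p - q \<noteq> 0" by simp
  then have f: "finite {z. poly (p - q) z = 0}" by (rule poly_roots_finite)
  have "UNIV - {0} \<subseteq> {z. poly (p - q) z = 0}" using assms by auto
  then have "finite (UNIV - {0::complex})" using f finite_subset by blast
  then show False using infinite_UNIV_char_0[where 'a=complex] by simp
qed

lemma norm_ge_lemma: fixes a z :: complex assumes "norm a < 1" "norm z \<ge> 1"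
  shows "norm (1 - cnj a * z) \<le> norm (a - z)"
proof -
  have id: "(norm (a - z))^2 - (norm (1 - cnj a * z))^2 = (1 - (norm a)^2) * ((norm z)^2 - 1)"
    by (simp only: cmod_power2) (simp add: power2_eq_square algebra_simps)
  have "(norm a)^2 \<le> 1" using assms(1) by (simp add: power_le_one)
  moreover have "1 \<le> (norm z)^2" using assms(2) by (simp add: one_le_power)
  ultimately have "0 \<le> (1 - (norm a)^2) * ((norm z)^2 - 1)" by simp
  then have "(norm (1 - cnj a * z))^2 \<le> (norm (a - z))^2" using id by linarith
  then show ?thesis using power2_le_imp_le norm_ge_zero by blast
qed

lemma gcd1: fixes P Q :: "complex poly" assumes "P \<noteq> 0" "\<And>z. poly P z = 0 \<Longrightarrow> poly Q z \<noteq> 0"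
  shows "gcd P Q = 1"
proof -
  have g0: "gcd P Q \<noteq> 0" using assms(1) by simp
  have "degree (gcd P Q) = 0"
  proof (rule ccontr)
    assume "degree (gcd P Q) \<noteq> 0"
    then obtain z where z: "poly (gcd P Q) z = 0" using fta_deg by blast
    have "poly P z = 0" using z by (metis dvd_def gcd_dvd1 mult_eq_0_iff poly_mult)
    moreover have "poly Q z = 0" using z by (metis dvd_def gcd_dvd2 mult_eq_0_iff poly_mult)
    ultimately show False using assms(2) by blast
  qed
  then have "is_unit (gcd P Q)" using is_unit_iff_degree[OF g0] by simp
  then show ?thesis by simp
qed



locale bl =
  fixes \<omega> :: complex and a :: "nat \<Rightarrow> complex" and d :: nat
  assumes hw: "norm \<omega> = 1" and ha: "\<forall>j\<in>{1..d}. norm (a j) < 1" and hd: "d \<ge> 2"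
begin

abbreviation "P \<equiv> blaschke_num \<omega> a d"
abbreviation "Q \<equiv> blaschke_den a d"

lemma w0: "\<omega> \<noteq> 0" using hw by auto
lemma wcnj: "cnj \<omega> * \<omega> = 1"
  using hw by (metis complex_norm_square mult.commute of_real_1 power_one)

lemma poly_P: "poly P z = \<omega> * (\<Prod>j\<in>{1..d}. a j - z)"
  by (simp add: blaschke_num_def poly_prod)

lemma poly_Q: "poly Q z = (\<Prod>j\<in>{1..d}. 1 - cnj (a j) * z)"
  by (simp add: blaschke_den_def poly_prod mult.commute)

lemma deg_P: "degree P = d"
proof -
  have "degree (\<Prod>j\<in>{1..d}. [:a j, -1:]) = (\<Sum>j\<in>{1..d}. degree [:a j, -1::complex:])"
    by (rule degree_prod_eq_sum_degree) auto
  then show ?thesis using w0 by (simp add: blaschke_num_def)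
qed

lemma deg_Q: "degree Q \<le> d"
proof -
  have "degree Q \<le> sum (degree \<circ> (\<lambda>j. [:1, - cnj (a j):])) {1..d}"
    unfolding blaschke_den_def by (rule degree_prod_sum_le) simp
  also have "\<dots> \<le> sum (\<lambda>j. 1) {1..d}" by (intro sum_mono) simp
  finally show ?thesis by simp
qed

lemma nocom: "poly P z = 0 \<Longrightarrow> poly Q z \<noteq> 0"
proof
  assume "poly P z = 0" "poly Q z = 0"
  then obtain j where j: "j \<in> {1..d}" "a j = z" using w0 by (auto simp: poly_P)
  obtain i where i: "i \<in> {1..d}" "cnj (a i) * z = 1" using \<open>poly Q z = 0\<close> by (auto simp: poly_Q)
  have n1: "norm (a i) < 1" "norm (a j) < 1" using ha i j by auto
  have "norm (a i) * norm (a j) \<le> norm (a i) * 1" using n1 by (intro mult_left_mono) auto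
  then have "norm (cnj (a i) * z) < 1" using n1 j by (simp add: norm_mult)
  then show False using i by simp
qed

lemma symP: assumes "z \<noteq> 0"
  shows "z ^ d * cnj (poly P (1 / cnj z)) = (-1) ^ d * cnj \<omega> * poly Q z"
proof -
  have "z ^ d * cnj (poly P (1 / cnj z)) = cnj \<omega> * ((\<Prod>j\<in>{1..d}. z) * (\<Prod>j\<in>{1..d}. cnj (a j) - 1 / z))"
    by (simp add: poly_P)
  also have "\<dots> = cnj \<omega> * (\<Prod>j\<in>{1..d}. z * (cnj (a j) - 1 / z))"
    by (simp only: prod.distrib[symmetric])
  also have "\<dots> = cnj \<omega> * (\<Prod>j\<in>{1..d}. - (1 - cnj (a j) * z))"
    by (intro arg_cong[where f="\<lambda>x. cnj \<omega> * x"] prod.cong refl) (simp add: field_simps assms)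
  also have "\<dots> = (-1) ^ d * cnj \<omega> * poly Q z" by (subst prod_uminus) (simp add: poly_Q mult_ac)
  finally show ?thesis .
qed

lemma symQ: assumes "z \<noteq> 0"
  shows "z ^ d * cnj (poly Q (1 / cnj z)) = (-1) ^ d * cnj \<omega> * poly P z"
proof -
  have "z ^ d * cnj (poly Q (1 / cnj z)) = ((\<Prod>j\<in>{1..d}. z) * (\<Prod>j\<in>{1..d}. 1 - a j / z))"
    by (simp add: poly_Q)
  also have "\<dots> = (\<Prod>j\<in>{1..d}. z * (1 - a j / z))"
    by (simp only: prod.distrib[symmetric])
  also have "\<dots> = (\<Prod>j\<in>{1..d}. - (a j - z))"
    by (intro prod.cong refl) (simp add: field_simps assms)
  also have "\<dots> = (-1) ^ d * (cnj \<omega> * \<omega>) * (\<Prod>j\<in>{1..d}. a j - z)" by (subst prod_uminus) (simp add: wcnj)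
  also have "\<dots> = (-1) ^ d * cnj \<omega> * poly P z" by (simp add: poly_P)
  finally show ?thesis .
qed

sublocale ratf P Q d
  using deg_P deg_Q hd nocom by unfold_locales auto

end


context bl begin

lemma eps0: "(-1) ^ d * cnj \<omega> \<noteq> 0" using w0 by simp

lemma refl_level: "\<exists>w' \<kappa>. \<kappa> \<noteq> 0 \<and> (\<forall>z. z \<noteq> 0 \<longrightarrow> z ^ d * cnj (poly (lev P Q w) (1 / cnj z)) = \<kappa> * poly (lev P Q w') z)"
proof (cases w)
  case None
  show ?thesis
    by (rule exI[of _ "Some 0"], rule exI[of _ "(-1) ^ d * cnj \<omega>"]) (simp add: None lev_def symQ eps0 w0)
next
  case (Some c)
  define \<epsilon> where "\<epsilon> = (-1) ^ d * cnj \<omega>"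
  have e0: "\<epsilon> \<noteq> 0" using eps0 by (simp add: \<epsilon>_def)
  have k: "z ^ d * cnj (poly (lev P Q w) (1 / cnj z)) = \<epsilon> * poly Q z - cnj c * \<epsilon> * poly P z" if "z \<noteq> 0" for z
  proof -
    have "z ^ d * cnj (poly (lev P Q w) (1 / cnj z)) = z ^ d * cnj (poly P (1 / cnj z)) - cnj c * (z ^ d * cnj (poly Q (1 / cnj z)))"
      using Some by (simp add: lev_def algebra_simps)
    then show ?thesis using symP[OF that] symQ[OF that] by (simp add: \<epsilon>_def)
  qed
  show ?thesis
  proof (cases "c = 0")
    case True
    show ?thesis
    proof (rule exI[of _ None], rule exI[of _ \<epsilon>], intro conjI allI impI)
      show "\<epsilon> \<noteq> 0" by (rule e0)
      fix z :: complex assume "z \<noteq> 0"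
      then show "z ^ d * cnj (poly (lev P Q w) (1 / cnj z)) = \<epsilon> * poly (lev P Q None) z"
        using k[OF \<open>z \<noteq> 0\<close>] True by (simp add: lev_def)
    qed
  next
    case False
    show ?thesis
    proof (rule exI[of _ "Some (1 / cnj c)"], rule exI[of _ "- cnj c * \<epsilon>"], intro conjI allI impI)
      show "- cnj c * \<epsilon> \<noteq> 0" using False e0 by simp
      fix z :: complex assume "z \<noteq> 0"
      then have "z ^ d * cnj (poly (lev P Q w) (1 / cnj z)) = \<epsilon> * poly Q z - cnj c * \<epsilon> * poly P z"
        by (rule k)
      also have "\<dots> = - cnj c * \<epsilon> * poly (lev P Q (Some (1 / cnj c))) z"
        using False by (simp add: lev_def field_simps)
      finally show "z ^ d * cnj (poly (lev P Q w) (1 / cnj z)) = - cnj c * \<epsilon> * poly (lev P Q (Some (1 / cnj c))) z" .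
    qed
  qed
qed

lemma R1: assumes "[:-z0,1:]^2 dvd lev P Q w" "z0 \<noteq> 0"
  shows "\<exists>w'. [:-(1 / cnj z0),1:]^2 dvd lev P Q w'"
proof -
  obtain T where T: "lev P Q w = [:-z0,1:]^2 * T" using assms(1) by (metis dvdE)
  have T0: "T \<noteq> 0" using T lev_ne by auto
  have "degree (lev P Q w) = 2 + degree T" using T T0 by (simp add: degree_mult_eq degree_power_eq)
  then have dT: "degree T \<le> d - 2" using lev_deg[of w] by simp
  obtain w' \<kappa> where k0: "\<kappa> \<noteq> 0" and k: "\<And>z. z \<noteq> 0 \<Longrightarrow> z ^ d * cnj (poly (lev P Q w) (1 / cnj z)) = \<kappa> * poly (lev P Q w') z"
    using refl_level[of w] by blast
  define z1 where "z1 = 1 / cnj z0"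
  have "lev P Q w' = [:-z1,1:]^2 * smult (cnj z0 ^ 2 / \<kappa>) (refl (d - 2) T)"
  proof (rule poly_eq_nz)
    fix z :: complex assume z: "z \<noteq> 0"
    define t where "t = cnj (poly T (1 / cnj z))"
    have "\<kappa> * poly (lev P Q w') z = z ^ d * ((1 / z - cnj z0) ^ 2 * t)"
      using k[OF z] by (simp add: T t_def)
    also have "z ^ d = z ^ 2 * z ^ (d - 2)" using hd by (metis power_add le_add_diff_inverse)
    finally have k1: "\<kappa> * poly (lev P Q w') z = (z ^ 2 * (1 / z - cnj z0) ^ 2) * (z ^ (d - 2) * t)"
      by (simp add: mult_ac)
    have A: "z ^ 2 * (1 / z - cnj z0) ^ 2 = cnj z0 ^ 2 * (z - z1) ^ 2"
      using z assms(2) by (simp add: z1_def field_simps power2_eq_square)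
    have pr: "poly (refl (d - 2) T) z = z ^ (d - 2) * t" using poly_refl[OF dT z] by (simp add: t_def)
    show "poly (lev P Q w') z = poly ([:-z1,1:]^2 * smult (cnj z0 ^ 2 / \<kappa>) (refl (d - 2) T)) z"
      using k1 A pr k0 by (simp add: field_simps)
  qed
  then show ?thesis unfolding z1_def by (metis dvd_triv_left)
qed

lemma R2: assumes "[:-0,1:]^2 dvd lev P Q w"
  shows "\<exists>w'. degree (lev P Q w') + 2 \<le> d"
proof -
  obtain T where T: "lev P Q w = [:-0,1:]^2 * T" using assms(1) by (metis dvdE)
  have T0: "T \<noteq> 0" using T lev_ne by auto
  have "degree (lev P Q w) = 2 + degree T" using T T0 by (simp add: degree_mult_eq degree_power_eq)
  then have dT: "degree T \<le> d - 2" using lev_deg[of w] by simp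
  obtain w' \<kappa> where k0: "\<kappa> \<noteq> 0" and k: "\<And>z. z \<noteq> 0 \<Longrightarrow> z ^ d * cnj (poly (lev P Q w) (1 / cnj z)) = \<kappa> * poly (lev P Q w') z"
    using refl_level[of w] by blast
  have "lev P Q w' = smult (1 / \<kappa>) (refl (d - 2) T)"
  proof (rule poly_eq_nz)
    fix z :: complex assume z: "z \<noteq> 0"
    define t where "t = cnj (poly T (1 / cnj z))"
    have "\<kappa> * poly (lev P Q w') z = z ^ d * ((1 / z) ^ 2 * t)"
      using k[OF z] by (simp add: T t_def)
    also have "z ^ d = z ^ 2 * z ^ (d - 2)" using hd by (metis power_add le_add_diff_inverse)
    finally have k1: "\<kappa> * poly (lev P Q w') z = z ^ (d - 2) * t"
      using z by (simp add: field_simps power2_eq_square)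
    have pr: "poly (refl (d - 2) T) z = z ^ (d - 2) * t" using poly_refl[OF dT z] by (simp add: t_def)
    show "poly (lev P Q w') z = poly (smult (1 / \<kappa>) (refl (d - 2) T)) z"
      using k1 pr k0 by (simp add: field_simps)
  qed
  then have "degree (lev P Q w') \<le> d - 2"
    using degree_smult_le[of "1/\<kappa>" "refl (d - 2) T"] degree_refl[of "d - 2" T] by simp
  then have "degree (lev P Q w') + 2 \<le> d" using hd by linarith
  then show ?thesis by blast
qed

end


context bl begin

lemma mod_out: assumes "norm z \<ge> 1"
  shows "rm P Q (Some z) = None \<or> (\<exists>c. rm P Q (Some z) = Some c \<and> norm c \<ge> 1)"
proof (cases "poly Q z = 0")
  case True then show ?thesis by (simp add: rm_def)
next
  case False
  have "norm (poly Q z) = (\<Prod>j\<in>{1..d}. norm (1 - cnj (a j) * z))"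
    by (simp add: poly_Q prod_norm)
  also have "\<dots> \<le> (\<Prod>j\<in>{1..d}. norm (a j - z))"
    using ha assms by (intro prod_mono) (auto intro: norm_ge_lemma)
  also have "\<dots> = norm (poly P z)" by (simp add: poly_P norm_mult hw prod_norm)
  finally have le: "norm (poly Q z) \<le> norm (poly P z)" .
  have "norm (poly P z / poly Q z) \<ge> 1" using le False by (simp add: norm_divide le_divide_eq_1)
  then show ?thesis using False by (simp add: rm_def)
qed

lemma mod_inf: assumes "rm P Q None = Some c" shows "norm c \<ge> 1"
proof -
  have c: "c = lead_coeff P / lead_coeff Q" using assms deg_P deg_Q
    by (auto simp: rm_def split: if_splits)
  have lP: "norm (lead_coeff P) = 1"
    by (simp add: blaschke_num_def lead_coeff_prod norm_mult hw prod_norm[symmetric] w0 norm_power)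
  have "norm (lead_coeff Q) = (\<Prod>j\<in>{1..d}. norm (lead_coeff [:1, - cnj (a j):]))"
    by (simp add: blaschke_den_def lead_coeff_prod prod_norm)
  also have "\<dots> \<le> 1"
  proof (rule prod_le_1)
    fix j assume j: "j \<in> {1..d}"
    show "0 \<le> norm (lead_coeff [:1, - cnj (a j):]) \<and> norm (lead_coeff [:1, - cnj (a j):]) \<le> 1"
      using ha j by (cases "a j = 0") (auto simp: less_imp_le)
  qed
  finally have lQ: "norm (lead_coeff Q) \<le> 1" .
  have "lead_coeff Q \<noteq> 0" using Q_ne by simp
  then have "norm (lead_coeff Q) > 0" by simp
  then show ?thesis using c lP lQ by (simp add: norm_divide)
qed

lemma outside_crit: "\<exists>w. (w = None \<or> (\<exists>c. w = Some c \<and> norm c \<ge> 1)) \<and> card (rm P Q -` {w}) < d"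
proof (cases "\<exists>z0. z0 \<noteq> 0 \<and> poly W z0 = 0")
  case True
  then obtain z0 where z0: "z0 \<noteq> 0" "poly W z0 = 0" by blast
  have dv: "[:-z0,1:]^2 dvd lev P Q (rm P Q (Some z0))" by (rule W_root[OF z0(2)])
  show ?thesis
  proof (cases "norm z0 \<ge> 1")
    case True
    show ?thesis using mod_out[OF True] crit1[OF dv] by blast
  next
    case False
    define z1 where "z1 = 1 / cnj z0"
    obtain w' where dv': "[:-z1,1:]^2 dvd lev P Q w'" using R1[OF dv z0(1)] unfolding z1_def by blast
    have "[:-z1,1:] dvd lev P Q w'" using dv' by (metis dvd_mult_left power2_eq_square)
    then have "poly (lev P Q w') z1 = 0" using poly_eq_0_iff_dvd by blast
    then have r: "rm P Q (Some z1) = w'" using rm_Some by blast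
    have "norm z1 \<ge> 1" using False z0(1) by (simp add: z1_def norm_divide le_divide_eq_1)
    then show ?thesis using mod_out[of z1] r crit1[OF dv'] by blast
  qed
next
  case False
  obtain z where "poly W z = 0" using fta_deg W_deg[OF hd] by blast
  then have "poly W 0 = 0" using False by (cases "z = 0") auto
  then have dv: "[:-0,1:]^2 dvd lev P Q (rm P Q (Some 0))" by (rule W_root)
  obtain w' where dw: "degree (lev P Q w') + 2 \<le> d" using R2[OF dv] by blast
  have "rm P Q None = w'" using rm_None dw by simp
  then have "w' = None \<or> (\<exists>c. w' = Some c \<and> norm c \<ge> 1)" using mod_inf by (cases w') auto
  then show ?thesis using crit2[OF dw] by blast
qed

end

theorem proposition4p4:
  fixes \<omega> :: complex and a :: "nat \<Rightarrow> complex" and d :: nat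
  assumes "norm \<omega> = 1"
    and "\<forall>j\<in>{1..d}. norm (a j) < 1"
    and "d \<ge> 2"
  shows "\<exists>w. (w = None \<or> (\<exists>c. w = Some c \<and> norm c \<ge> 1)) \<and>
             critical_value (blaschke_num \<omega> a d) (blaschke_den a d) w"
proof -
  interpret bl \<omega> a d using assms by unfold_locales auto
  have g: "gcd P Q = 1" using gcd1[OF P_ne] nocom by blast
  have rn: "red_num P Q = P" "red_den P Q = Q" using g by (simp_all add: red_num_def red_den_def)
  have rmap: "rat_map P Q = rm P Q"
    by (rule ext) (simp add: rat_map_def rm_def rn Let_def)
  have rdeg: "rat_degree P Q = d" using rn deg_P deg_Q by (simp add: rat_degree_def)
  obtain w where w: "w = None \<or> (\<exists>c. w = Some c \<and> norm c \<ge> 1)" "card (rm P Q -` {w}) < d"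
    using outside_crit by blast
  have "critical_value P Q w" unfolding critical_value_def regular_value_def rmap rdeg using w(2) by simp
  then show ?thesis using w(1) by blast
qed

end
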